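(* The following identities hold: (i) $M(1;2;1;x)\cdot M(1;2;1;-x)=1$ as formal power series in $x$; (ii) $M(0;2;1;x)=-M(0;2;1;-x)$ as formal power series in $x$; (iii) for complex $|x|<1$ the series $M(0;2;1;x)$ converges and equals $\operatorname{arsinh}(x)$ (principal branch, $\operatorname{arsinh}(0)=0$).
   Context: For $m,a,b\in\mathbb{C}$ the master series is the power series $M(m;a;b;x)=m+x+\sum_{\ell\ge 2}\frac{x^\ell}{\ell!}\prod_{\gamma=1}^{\ell-1}(m-a\gamma+b\ell)$. *)

theory Defs
  imports "HOL-Complex_Analysis.Complex_Analysis" "HOL-Computational_Algebra.Formal_Power_Series"
begin

definition master_coeff :: "complex \<Rightarrow> complex \<Rightarrow> complex \<Rightarrow> nat \<Rightarrow> complex" where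
  "master_coeff m a b l =
     (if l = 0 then m
      else if l = 1 then 1
      else (\<Prod>g = 1..l - 1. m - a * of_nat g + b * of_nat l) / fact l)"

definition master :: "complex \<Rightarrow> complex \<Rightarrow> complex \<Rightarrow> complex fps" where
  "master m a b = Abs_fps (master_coeff m a b)"

end

theory Submission
  imports Defs "HOL-Computational_Algebra.Formal_Laurent_Series"
begin


definition Pn :: "nat \<Rightarrow> nat" where "Pn k = (\<Prod>i<k. 2*i+1)"

lemma Pn_fact: "Pn k * 2^k * fact k = (fact (2*k) :: nat)"
proof (induction k)
  case 0 then show ?case by (simp add: Pn_def)
next
  case (Suc k)
  have "Pn (Suc k) = Pn k * (2*k+1)" by (simp add: Pn_def)
  moreover have "fact (2 * Suc k) = (2*k+2)*(2*k+1)*(fact (2*k)::nat)"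
    by (simp add: algebra_simps)
  ultimately show ?case using Suc.IH[symmetric] by (simp add: algebra_simps)
qed

lemma Pn_le: "Pn k \<le> 2^k * fact k"
proof (induction k)
  case 0 then show ?case by (simp add: Pn_def)
next
  case (Suc k)
  have "Pn (Suc k) = Pn k * (2*k+1)" by (simp add: Pn_def)
  also have "\<dots> \<le> (2^k * fact k) * (2*k+2)" by (rule mult_mono) (use Suc in auto)
  also have "\<dots> = 2^Suc k * fact (Suc k)" by (simp add: algebra_simps)
  finally show ?case .
qed

lemma prod_base: "(\<Prod>g=1..k. (of_nat (2*k+1) - 2 * of_nat g :: complex)) = of_nat (Pn k)"
proof -
  have "(\<Prod>g=1..k. (of_nat (2*k+1) - 2 * of_nat g :: complex)) = (\<Prod>i<k. of_nat (2*i+1))"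
    by (rule prod.reindex_bij_witness[where i="\<lambda>b. k - b" and j="\<lambda>g. k - g"]) (auto simp: of_nat_diff)
  then show ?thesis by (simp add: Pn_def)
qed

lemma prod_split:
  assumes "k \<le> n"
  shows "(\<Prod>g=1..n. (of_nat (2*k+1) - 2 * of_nat g :: complex)) = of_nat (Pn k) * (-1)^(n-k) * of_nat (Pn (n-k))"
  using assms
proof (induction n rule: dec_induct)
  case base then show ?case using prod_base[of k] by (simp add: Pn_def[of 0])
next
  case (step n)
  define d where "d = n - k"
  have sd: "Suc n - k = Suc d" using step by (simp add: d_def)
  have "(\<Prod>g=1..Suc n. (of_nat (2*k+1) - 2 * of_nat g :: complex)) =
     (\<Prod>g=1..n. (of_nat (2*k+1) - 2 * of_nat g :: complex)) * (of_nat (2*k+1) - 2 * of_nat (Suc n))"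
    by (simp add: prod.nat_ivl_Suc')
  also have "(of_nat (2*k+1) - 2 * of_nat (Suc n) :: complex) = - of_nat (2*d+1)"
    using step by (simp add: d_def of_nat_diff algebra_simps)
  also have "(\<Prod>g=1..n. (of_nat (2*k+1) - 2 * of_nat g :: complex)) = of_nat (Pn k) * (-1)^d * of_nat (Pn d)"
    using step.IH by (simp add: d_def)
  also have "Pn (Suc d) = Pn d * (2*d+1)" by (simp add: Pn_def)
  ultimately show ?case unfolding sd by (simp add: algebra_simps)
qed

lemma Pn_nz [simp]: "Pn k \<noteq> 0" by (simp add: Pn_def)

lemma aux_div: "(c::complex) \<noteq> 0 \<Longrightarrow> P \<noteq> 0 \<Longrightarrow> t \<noteq> 0 \<Longrightarrow> f \<noteq> 0 \<Longrightarrow>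
   c * (P * s * P / (c * (P * t * f))) = s * P / (t*f)"
  by (simp add: field_simps)

lemma gprod: "(\<Prod>i<k. (-1/2 - of_nat i :: complex)) = (-1)^k * of_nat (Pn k) / 2^k"
proof (induction k)
  case 0 then show ?case by (simp add: Pn_def)
next
  case (Suc k)
  have "Pn (Suc k) = Pn k * (2*k+1)" by (simp add: Pn_def)
  then show ?case using Suc by (simp add: field_simps)
qed

lemma gch_neg: "((-1/2) gchoose k :: complex) = (-1)^k * of_nat (Pn k) / (2^k * fact k)"
proof -
  have "((-1/2) gchoose k :: complex) = (\<Prod>i<k. (-1/2 - of_nat i :: complex)) / fact k"
    by (simp only: gbinomial_prod_rev atLeast0LessThan)
  then show ?thesis by (simp only: gprod) simp
qed

lemma gch_pos: "k \<ge> 1 \<Longrightarrow> ((1/2) gchoose k :: complex) = (-1)^(k-1) * of_nat (Pn (k-1)) / (2^k * fact k)"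
proof -
  assume "k \<ge> 1"
  then obtain j where k: "k = Suc j" by (cases k) auto
  have "(\<Prod>i<k. (1/2 - of_nat i :: complex)) = 1/2 * (\<Prod>i<j. (1/2 - of_nat (Suc i) :: complex))"
    unfolding k prod.lessThan_Suc_shift by simp
  also have "(\<Prod>i<j. (1/2 - of_nat (Suc i) :: complex)) = (\<Prod>i<j. (-1/2 - of_nat i :: complex))"
    by (intro prod.cong) auto
  finally have pr: "(\<Prod>i<k. (1/2 - of_nat i :: complex)) = 1/2 * ((-1)^j * of_nat (Pn j) / 2^j)"
    by (simp only: gprod)
  have "((1/2) gchoose k :: complex) = (\<Prod>i<k. (1/2 - of_nat i :: complex)) / fact k"
    by (simp only: gbinomial_prod_rev atLeast0LessThan)
  then show ?thesis by (simp only: pr) (simp add: k)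
qed

lemma coefA: "of_nat (2*k+1) * master_coeff 0 2 1 (2*k+1) = ((-1/2) gchoose k)"
proof (cases "k = 0")
  case True then show ?thesis by (simp add: master_coeff_def)
next
  case False
  have "(\<Prod>g = 1..2*k+1-1. 0 - 2 * of_nat g + 1 * of_nat (2*k+1) :: complex) =
        (\<Prod>g=1..2*k. (of_nat (2*k+1) - 2 * of_nat g :: complex))"
    by (intro prod.cong) auto
  also have "\<dots> = of_nat (Pn k) * (-1)^k * of_nat (Pn k)"
    using prod_split[of k "2*k"] by simp
  finally have p: "(\<Prod>g = 1..2*k+1-1. 0 - 2 * of_nat g + 1 * of_nat (2*k+1) :: complex) = of_nat (Pn k) * (-1)^k * of_nat (Pn k)" .
  have f: "(fact (2*k+1) :: complex) = of_nat (2*k+1) * (of_nat (Pn k) * 2^k * fact k)"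
  proof -
    have "(fact (2*k+1) :: complex) = of_nat (2*k+1) * fact (2*k)" by simp
    also have "(fact (2*k) :: complex) = of_nat (fact (2*k))" by simp
    also have "fact (2*k) = Pn k * 2^k * fact k" using Pn_fact[of k] by simp
    finally show ?thesis by simp
  qed
  have "Pn k \<noteq> 0" by (simp add: Pn_def)
  then have pn: "(of_nat (Pn k) :: complex) \<noteq> 0" by simp
  have c: "(of_nat (2*k+1) :: complex) \<noteq> 0" by (simp only: of_nat_eq_0_iff)
  have ne: "2*k+1 \<noteq> 0" "2*k+1 \<noteq> 1" using False by auto
  have t: "(2::complex)^k \<noteq> 0" "(fact k :: complex) \<noteq> 0" by auto
  show ?thesis unfolding master_coeff_def
    by (simp only: ne if_False p f gch_neg aux_div[OF c pn t])
qed

lemma coefB: "k \<ge> 1 \<Longrightarrow> master_coeff 1 2 1 (2*k) = ((1/2) gchoose k)"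
proof -
  assume k: "k \<ge> 1"
  have "(\<Prod>g = 1..2*k-1. 1 - 2 * of_nat g + 1 * of_nat (2*k) :: complex) =
        (\<Prod>g=1..2*k-1. (of_nat (2*k+1) - 2 * of_nat g :: complex))"
    by (intro prod.cong) auto
  also have "\<dots> = of_nat (Pn k) * (-1)^(k-1) * of_nat (Pn (k-1))"
    using prod_split[of k "2*k-1"] k by (simp add: numeral_2_eq_2)
  finally have p: "(\<Prod>g = 1..2*k-1. 1 - 2 * of_nat g + 1 * of_nat (2*k) :: complex) = of_nat (Pn k) * (-1)^(k-1) * of_nat (Pn (k-1))" .
  have f: "(fact (2*k) :: complex) = of_nat (Pn k) * 2^k * fact k"
  proof -
    have "(fact (2*k) :: complex) = of_nat (fact (2*k))" by simp
    also have "fact (2*k) = Pn k * 2^k * fact k" using Pn_fact[of k] by simp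
    finally show ?thesis by simp
  qed
  have "Pn k \<noteq> 0" by (simp add: Pn_def)
  then have pn: "(of_nat (Pn k) :: complex) \<noteq> 0" by simp
  have ne: "2*k \<noteq> 0" "2*k \<noteq> 1" using k by auto
  show ?thesis unfolding master_coeff_def
    by (simp only: ne if_False p f gch_pos[OF k]) (simp add: pn field_simps)
qed

lemma zeroA: "master_coeff 0 2 1 (2*k) = 0"
proof (cases "k = 0")
  case False
  have "(\<Prod>g = 1..2*k-1. 0 - 2 * of_nat g + 1 * of_nat (2*k) :: complex) = 0"
    by (rule prod_zero) (use False in \<open>auto intro!: bexI[of _ k]\<close>)
  then show ?thesis using False by (simp add: master_coeff_def)
qed (simp add: master_coeff_def)

lemma zeroB: "k \<ge> 1 \<Longrightarrow> master_coeff 1 2 1 (2*k+1) = 0"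
proof -
  assume k: "k \<ge> 1"
  have "(\<Prod>g = 1..2*k+1-1. 1 - 2 * of_nat g + 1 * of_nat (2*k+1) :: complex) = 0"
    by (rule prod_zero) (use k in \<open>auto intro!: bexI[of _ "k+1"]\<close>)
  then show ?thesis using k by (simp add: master_coeff_def)
qed

lemma part2: "master 0 2 1 = - (master 0 2 1 oo (- fps_X))"
proof -
  have "master_coeff 0 2 1 n = - ((-1)^n * master_coeff 0 2 1 n)" for n
  proof (cases "even n")
    case True then obtain k where "n = 2*k" by auto
    then show ?thesis by (simp add: zeroA)
  next
    case False then show ?thesis by simp
  qed
  then show ?thesis by (simp add: fps_eq_iff fps_compose_uminus' master_def)
qed

lemma part1: "master 1 2 1 * (master 1 2 1 oo (- fps_X)) = 1"
proof -
  define S where "S = fps_binomial (1/2 :: complex) oo fps_X^2"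
  have SS: "S * S = 1 + fps_X^2"
  proof -
    have "S * S = (fps_binomial (1/2) * fps_binomial (1/2 :: complex)) oo fps_X^2"
      unfolding S_def by (simp add: fps_compose_mult_distrib)
    also have "fps_binomial (1/2) * fps_binomial (1/2 :: complex) = fps_binomial 1"
      by (simp flip: fps_binomial_add_mult)
    also have "fps_binomial 1 oo fps_X^2 = (1 + fps_X :: complex fps) oo fps_X^2"
      by (simp add: fps_binomial_1)
    also have "\<dots> = 1 + fps_X^2"
      by (simp add: fps_compose_add_distrib)
    finally show ?thesis .
  qed
  have Sn: "S $ n = (if even n then (1/2) gchoose (n div 2) else 0)" for n
    unfolding S_def by (simp add: fps_nth_compose_X_power)
  have M: "master 1 2 1 = fps_X + S"
  proof (rule fps_ext)
    fix n
    show "master 1 2 1 $ n = (fps_X + S) $ n"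
    proof (cases "even n")
      case True then obtain k where n: "n = 2*k" by auto
      show ?thesis
      proof (cases "k = 0")
        case True then show ?thesis using n by (simp add: Sn master_def master_coeff_def)
      next
        case False then show ?thesis using n coefB[of k] by (simp add: Sn master_def)
      qed
    next
      case False then obtain k where n: "n = 2*k+1" by (metis oddE)
      show ?thesis
      proof (cases "k = 0")
        case True then show ?thesis using n by (simp add: Sn master_def master_coeff_def)
      next
        case False then show ?thesis using n zeroB[of k] by (simp add: Sn master_def)
      qed
    qed
  qed
  have Sm: "S oo (- fps_X) = S"
    by (rule fps_ext) (simp add: fps_compose_uminus' Sn)
  have Mc: "master 1 2 1 oo (- fps_X) = S - fps_X"
    unfolding M by (simp add: fps_compose_add_distrib Sm)
  have "(fps_X + S) * (S - fps_X) = S*S - fps_X^2" by (simp add: algebra_simps power2_eq_square)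
  then show ?thesis by (simp only: Mc) (simp only: M SS, simp)
qed



abbreviation "ac \<equiv> master_coeff 0 2 1"

lemma ac_bound: "norm (ac n) \<le> 1"
proof (cases "even n")
  case True then obtain k where "n = 2*k" by auto
  then show ?thesis by (simp add: zeroA)
next
  case False then obtain k where n: "n = 2*k+1" by (metis oddE)
  have g: "norm ((-1/2) gchoose k :: complex) \<le> 1"
  proof -
    have "norm ((-1/2) gchoose k :: complex) = real (Pn k) / (2^k * fact k)"
      by (subst gch_neg) (simp add: norm_divide norm_mult norm_power)
    also have "\<dots> \<le> 1"
    proof -
      have "real (Pn k) \<le> real (2^k * fact k)" using Pn_le[of k] by linarith
      then show ?thesis by (simp add: field_simps)
    qed
    finally show ?thesis .
  qed
  have "ac n = ((-1/2) gchoose k) / of_nat (2*k+1)"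
  proof -
    have c: "(of_nat (2*k+1) :: complex) \<noteq> 0" by (simp only: of_nat_eq_0_iff)
    have aux: "(c::complex) \<noteq> 0 \<Longrightarrow> c * x = y \<Longrightarrow> x = y / c" for c x y by (simp add: field_simps)
    show ?thesis unfolding n by (rule aux[OF c coefA])
  qed
  then have "norm (ac n) = norm ((-1/2) gchoose k :: complex) / real (2*k+1)"
    by (simp only: norm_divide norm_of_nat)
  also have "\<dots> \<le> norm ((-1/2) gchoose k :: complex)"
    using divide_left_mono[of 1 "real (2*k+1)" "norm ((-1/2) gchoose k :: complex)"] by simp
  finally show ?thesis using g by simp
qed

lemma ac_summable: "norm (z::complex) < 1 \<Longrightarrow> summable (\<lambda>n. ac n * z^n)"
proof (rule summable_comparison_test')
  assume "norm z < 1"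
  then show "summable (\<lambda>n. norm z ^ n)" by (simp add: summable_geometric)
  fix n
  have "norm (ac n * z^n) = norm (ac n) * norm z ^ n" by (simp add: norm_mult norm_power)
  also have "\<dots> \<le> 1 * norm z ^ n" by (rule mult_right_mono) (use ac_bound in auto)
  finally show "norm (ac n * z^n) \<le> norm z ^ n" by simp
qed

lemma diffs_val:
  assumes z: "norm (z::complex) < 1"
  shows "(\<Sum>n. diffs ac n * z^n) = (1 + z^2) powr (-1/2)"
proof -
  have sm: "summable (\<lambda>n. diffs ac n * z^n)"
    by (rule termdiff_converges[where K=1]) (use z ac_summable in auto)
  have "(\<lambda>n. sum (\<lambda>n. diffs ac n * z^n) {n*2..<n*2+2}) sums (\<Sum>n. diffs ac n * z^n)"
    by (rule sums_group) (use sm in \<open>auto simp: summable_sums\<close>)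
  moreover have "sum (\<lambda>n. diffs ac n * z^n) {n*2..<n*2+2} = ((-1/2) gchoose n) * (z^2)^n" for n
  proof -
    have "sum (\<lambda>n. diffs ac n * z^n) {n*2..<n*2+2} = diffs ac (2*n) * z^(2*n) + diffs ac (2*n+1) * z^(2*n+1)"
      by (simp add: numeral_2_eq_2 mult.commute)
    also have "diffs ac (2*n) = (-1/2) gchoose n"
      using coefA[of n] by (simp add: diffs_def)
    also have "diffs ac (2*n+1) = 0"
      using zeroA[of "Suc n"] by (simp add: diffs_def)
    finally show ?thesis by (simp add: power_mult)
  qed
  ultimately have "(\<lambda>n. ((-1/2) gchoose n) * (z^2)^n) sums (\<Sum>n. diffs ac n * z^n)" by simp
  moreover have "(\<lambda>n. ((-1/2) gchoose n) * (z^2)^n) sums (1 + z^2) powr (-1/2)"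
    by (rule gen_binomial_complex) (use z in \<open>simp add: norm_power power_less_one_iff\<close>)
  ultimately show ?thesis using sums_unique2 by blast
qed

lemma arsinh_alt: "arsinh (z::complex) = Ln (z + csqrt (z^2+1))"
  by (simp add: arsinh_def csqrt_conv_powr)

lemma arsinh_deriv:
  assumes z: "norm (z::complex) < 1"
  shows "(arsinh has_field_derivative (1 + z^2) powr (-1/2)) (at z)"
proof -
  define w where "w = z^2 + 1"
  define sq where "sq = csqrt w"
  have "Re (z^2) \<ge> - norm (z^2)" using abs_Re_le_cmod[of "z^2"] by linarith
  moreover have "norm (z^2) < 1" using z by (simp add: norm_power power_less_one_iff)
  ultimately have rew: "Re w > 0" unfolding w_def by simp
  then have wn: "w \<notin> \<real>\<^sub>\<le>\<^sub>0" by (simp add: complex_nonpos_Reals_iff)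
  have ss: "sq^2 = w" unfolding sq_def by simp
  have prod1: "(z + sq) * (sq - z) = 1" using ss unfolding w_def by (simp add: algebra_simps power2_eq_square)
  then have tn: "z + sq \<noteq> 0" by auto
  have sn: "sq \<noteq> 0" using ss rew by auto
  have tnp: "z + sq \<notin> \<real>\<^sub>\<le>\<^sub>0"
  proof
    assume "z + sq \<in> \<real>\<^sub>\<le>\<^sub>0"
    then have im: "Im (z+sq) = 0" and re: "Re (z+sq) \<le> 0" by (auto simp: complex_nonpos_Reals_iff)
    with tn have re': "Re (z+sq) < 0" by (metis complex_eq_iff less_eq_real_def zero_complex.simps)
    have "sq - z = inverse (z + sq)" using prod1 tn by (simp add: field_simps)
    then have "Re (sq - z) = Re (z+sq) / (Re (z+sq))^2" using im by (simp add: Re_inverse complex_norm_square power2_eq_square)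
    also have "\<dots> < 0" using re' by (simp add: divide_neg_pos)
    finally have "Re (sq - z) < 0" .
    with re' have "Re sq < 0" by simp
    with Re_csqrt[of w] show False unfolding sq_def by simp
  qed
  have eq: "arsinh = (\<lambda>z::complex. Ln (z + csqrt (z^2+1)))" by (rule ext) (rule arsinh_alt)
  have d: "((\<lambda>z::complex. Ln (z + csqrt (z^2+1))) has_field_derivative ((1 + (2*z) / (2 * sq)) / (z+sq))) (at z)"
    using wn tnp unfolding sq_def w_def
    by (auto intro!: derivative_eq_intros simp: field_simps)
  have "1 + (2*z) / (2 * sq) = (z + sq) / sq" using sn by (simp add: field_simps)
  moreover have "a \<noteq> 0 \<Longrightarrow> a / b / a = inverse (b::complex)" for a b
    by (cases "b = 0") (simp_all add: field_simps)
  ultimately have "(1 + (2*z) / (2 * sq)) / (z+sq) = inverse sq" using tn by simp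
  also have "inverse sq = (1 + z^2) powr (-1/2)"
  proof -
    have "(-1/2::complex) = - (1/2)" by simp
    then show ?thesis unfolding sq_def w_def by (simp only: powr_minus csqrt_conv_powr add.commute)
  qed
  finally show ?thesis using d eq by simp
qed

lemma part3: "\<forall>x::complex. norm x < 1 \<longrightarrow> (\<lambda>n. fps_nth (master 0 2 1) n * x ^ n) sums arsinh x"
proof (intro allI impI)
  fix x :: complex assume x: "norm x < 1"
  define F where "F = (\<lambda>z::complex. \<Sum>n. ac n * z^n)"
  have dF: "((\<lambda>z. F z - arsinh z) has_field_derivative 0) (at z within ball 0 1)" if z: "z \<in> ball 0 1" for z
  proof -
    from z have zn: "norm z < 1" by simp
    have "(F has_field_derivative (\<Sum>n. diffs ac n * z^n)) (at z)"
      unfolding F_def by (rule termdiffs_strong'[where K=1]) (use ac_summable zn in auto)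
    then have "(F has_field_derivative (1 + z^2) powr (-1/2)) (at z)" using diffs_val[OF zn] by simp
    from DERIV_diff[OF this arsinh_deriv[OF zn]]
    show ?thesis by (simp add: has_field_derivative_at_within)
  qed
  obtain c where c: "\<forall>z\<in>ball 0 1. F z - arsinh z = c"
    using has_field_derivative_zero_constant[OF convex_ball dF] by blast
  have "c = 0" using c[rule_format, of 0] by (simp add: F_def master_coeff_def)
  then have "F x = arsinh x" using c[rule_format, of x] x by simp
  moreover have "(\<lambda>n. ac n * x^n) sums F x" unfolding F_def by (rule summable_sums[OF ac_summable[OF x]])
  ultimately show "(\<lambda>n. fps_nth (master 0 2 1) n * x ^ n) sums arsinh x" by (simp add: master_def)
qed

theorem mainTheorem7:
  shows "master 1 2 1 * (master 1 2 1 oo (- fps_X)) = 1 \<and>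
         master 0 2 1 = - (master 0 2 1 oo (- fps_X)) \<and>
         (\<forall>x::complex. norm x < 1 \<longrightarrow>
           (\<lambda>n. fps_nth (master 0 2 1) n * x ^ n) sums arsinh x)"
  using part1 part2 part3 by blast

end
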